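(* Let $J$ be a conserved interval of $\mathcal{P}$ and $b$ a positive integer. Then $J$ is $b$-nested if and only if either $J$ contains no $b$-gap, or $J$ contains exactly one $b$-gap and this $b$-gap is good.
   Context: Let $n\geq 2$ and let $\mathcal{P}=\{P_1,\ldots,P_K\}$ be signed permutations of $\{1,\ldots,n\}$: each $P_k$ is an ordering of $1,\ldots,n$ in which each element carries a sign $+$ or $-$. Assume $P_1=(+1,+2,\ldots,+n)$ and that every $P_k$ has first element $+1$ and last element $+n$. For integers $i\leq j$ write $(i..j)=\{i,\ldots,j\}$. A conserved interval of $\mathcal{P}$ is either a singleton, or a set $(a..c)$ with $a<c$ which (ignoring signs) occupies consecutive positions in every $P_k$ and which, in every $P_k$, has either $+a$ at its left end and $+c$ at its right end, or $-c$ at its left end and $-a$ at its right end. Two intervals $(i..j)$ and $(k..l)$ overlap if $i<k\leq j<l$ or $k<i\leq l<j$. A conserved interval is strong if it has at least two elements and overlaps no other conserved interval. A conserved interval $I$ is $b$-nested if $|I|=1$ or $I$ strictly contains a $b$-nested conserved interval $I'$ with $|I'|\geq|I|-b$ (recursive on size). For a conserved interval $I=(a..c)$, a set $\{f_1,\ldots,f_k\}$ with $a=f_1<\cdots<f_k=c$ is a set of frontiers of $I$ if $(f_i..f_j)$ is conserved for all $1\leq i<j\leq k$; $F_I$ denotes the unique inclusion-maximal set of frontiers of $I$. Write $F_J=\{f_1<\cdots<f_k\}$. $J$ contains a $b$-gap at position $l$ ($1\leq l<k$) if $|(f_l..f_{l+1})|>b+1$. Such a $b$-gap is good if there is a strong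 conserved interval $I$ which is $b$-nested, satisfies $f_l<\min I$ and $\max I<f_{l+1}$, and has $|I|\geq f_{l+1}-f_l+1-b$. *)

theory Defs
  imports Main
begin

text \<open>A signed permutation of 1..n is an int list; the sign of an entry is its sign,
  the underlying element is its absolute value.\<close>

definition signed_perm :: "nat \<Rightarrow> int list \<Rightarrow> bool" where
  "signed_perm n p \<longleftrightarrow> length p = n \<and> distinct (map abs p) \<and> set (map abs p) = {1..int n}"

definition conserved_in :: "int list \<Rightarrow> int \<Rightarrow> int \<Rightarrow> bool" where
  "conserved_in p a c \<longleftrightarrow>
     (\<exists>i. i + nat (c - a + 1) \<le> length p
        \<and> abs ` set (take (nat (c - a + 1)) (drop i p)) = {a..c}
        \<and> ((p ! i = a \<and> p ! (i + nat (c - a)) = c)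
           \<or> (p ! i = - c \<and> p ! (i + nat (c - a)) = - a)))"

definition conserved :: "nat \<Rightarrow> int list list \<Rightarrow> int set \<Rightarrow> bool" where
  "conserved n Ps I \<longleftrightarrow>
     (\<exists>a. 1 \<le> a \<and> a \<le> int n \<and> I = {a})
     \<or> (\<exists>a c. a < c \<and> 1 \<le> a \<and> c \<le> int n \<and> I = {a..c} \<and> (\<forall>p\<in>set Ps. conserved_in p a c))"

definition overlap :: "int set \<Rightarrow> int set \<Rightarrow> bool" where
  "overlap I J \<longleftrightarrow>
     (Min I < Min J \<and> Min J \<le> Max I \<and> Max I < Max J)
     \<or> (Min J < Min I \<and> Min I \<le> Max J \<and> Max J < Max I)"

definition strong :: "nat \<Rightarrow> int list list \<Rightarrow> int set \<Rightarrow> bool" where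
  "strong n Ps I \<longleftrightarrow> conserved n Ps I \<and> card I \<ge> 2
     \<and> (\<forall>J. conserved n Ps J \<longrightarrow> \<not> overlap I J)"

inductive bnested :: "nat \<Rightarrow> int list list \<Rightarrow> nat \<Rightarrow> int set \<Rightarrow> bool"
  for n :: nat and Ps :: "int list list" and b :: nat where
  single: "conserved n Ps I \<Longrightarrow> card I = 1 \<Longrightarrow> bnested n Ps b I"
| step: "conserved n Ps I \<Longrightarrow> bnested n Ps b I' \<Longrightarrow> I' \<subset> I \<Longrightarrow> card I \<le> card I' + b
          \<Longrightarrow> bnested n Ps b I"

definition is_frontiers :: "nat \<Rightarrow> int list list \<Rightarrow> int set \<Rightarrow> int set \<Rightarrow> bool" where
  "is_frontiers n Ps I F \<longleftrightarrow> F \<subseteq> I \<and> Min I \<in> F \<and> Max I \<in> F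
     \<and> (\<forall>x\<in>F. \<forall>y\<in>F. x < y \<longrightarrow> conserved n Ps {x..y})"

definition max_frontiers :: "nat \<Rightarrow> int list list \<Rightarrow> int set \<Rightarrow> int set" where
  "max_frontiers n Ps I = (THE F. is_frontiers n Ps I F
      \<and> (\<forall>G. is_frontiers n Ps I G \<and> F \<subseteq> G \<longrightarrow> G = F))"

text \<open>A b-gap at position l is identified with the pair (f_l, f_{l+1}) of consecutive frontiers.\<close>
definition bgaps :: "nat \<Rightarrow> int list list \<Rightarrow> nat \<Rightarrow> int set \<Rightarrow> (int \<times> int) set" where
  "bgaps n Ps b J = (let F = max_frontiers n Ps J in
     {(x, y). x \<in> F \<and> y \<in> F \<and> x < y \<and> (\<forall>z\<in>F. \<not> (x < z \<and> z < y))
              \<and> y - x + 1 > int b + 1})"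

definition good_gap :: "nat \<Rightarrow> int list list \<Rightarrow> nat \<Rightarrow> int \<times> int \<Rightarrow> bool" where
  "good_gap n Ps b g \<longleftrightarrow> (\<exists>I. strong n Ps I \<and> bnested n Ps b I
       \<and> fst g < Min I \<and> Max I < snd g \<and> int (card I) \<ge> snd g - fst g + 1 - int b)"

end

theory Submission
  imports Defs
begin

definition V :: "int list \<Rightarrow> nat set \<Rightarrow> int set" where
  "V p S = (\<lambda>k. \<bar>p!k\<bar>) ` S"

lemma blk: "i + L \<le> length p \<Longrightarrow> abs ` set (take L (drop i p)) = V p {i..<i+L}"
proof -
  assume h: "i + L \<le> length p"
  have "set (take L (drop i p)) = (\<lambda>k. p!k) ` {i..<i+L}"
  proof -
    have "set (take L (drop i p)) = {take L (drop i p) ! k | k. k < length (take L (drop i p))}"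
      by (simp add: set_conv_nth)
    also have "\<dots> = {p ! (i+k) | k. k < L}" using h by (auto; metis nth_drop nth_take add_leD1 le_less_trans min.absorb1 length_drop diff_le_mono2 less_le_not_le le_diff_iff' le_add1 add_diff_cancel_left' )
    also have "\<dots> = (\<lambda>k. p!k) ` {i..<i+L}"
      by (auto simp: image_iff) (metis add_less_cancel_left le_add_diff_inverse)
    finally show ?thesis .
  qed
  then show ?thesis by (simp add: V_def image_image)
qed

lemma inj_abs: "distinct (map abs p) \<Longrightarrow> inj_on (\<lambda>k. \<bar>p!k\<bar>) {..<length p}"
  by (auto simp: inj_on_def distinct_conv_nth)

lemma inj_pos: "distinct (map abs p) \<Longrightarrow> k < length p \<Longrightarrow> k' < length p \<Longrightarrow> \<bar>p!k\<bar> = \<bar>p!k'\<bar> \<Longrightarrow> k = k'"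
  using inj_abs[of p] by (auto simp: inj_on_def)

lemma cin_iff:
  assumes d: "distinct (map abs p)" and ac: "a < c"
  shows "conserved_in p a c \<longleftrightarrow> (\<exists>i j. i \<le> j \<and> j < length p \<and> V p {i..j} = {a..c} \<and> j = i + nat (c - a)
        \<and> ((p!i = a \<and> p!j = c) \<or> (p!i = -c \<and> p!j = -a)))"
proof
  assume "conserved_in p a c"
  then obtain i where h: "i + nat (c - a + 1) \<le> length p"
      "abs ` set (take (nat (c - a + 1)) (drop i p)) = {a..c}"
      "((p ! i = a \<and> p ! (i + nat (c - a)) = c) \<or> (p ! i = - c \<and> p ! (i + nat (c - a)) = - a))"
    unfolding conserved_in_def by blast
  have e: "{i..<i + nat (c - a + 1)} = {i..i + nat (c-a)}" using ac by auto
  show "\<exists>i j. i \<le> j \<and> j < length p \<and> V p {i..j} = {a..c} \<and> j = i + nat (c - a)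
        \<and> ((p!i = a \<and> p!j = c) \<or> (p!i = -c \<and> p!j = -a))"
    apply (rule exI[of _ i], rule exI[of _ "i + nat (c-a)"])
    using h blk[OF h(1)] e ac by auto
next
  assume "\<exists>i j. i \<le> j \<and> j < length p \<and> V p {i..j} = {a..c} \<and> j = i + nat (c - a)
        \<and> ((p!i = a \<and> p!j = c) \<or> (p!i = -c \<and> p!j = -a))"
  then obtain i j where h: "i \<le> j" "j < length p" "V p {i..j} = {a..c}" "j = i + nat (c - a)"
     "((p!i = a \<and> p!j = c) \<or> (p!i = -c \<and> p!j = -a))" by blast
  have "inj_on (\<lambda>k. \<bar>p!k\<bar>) {i..j}" using inj_abs[OF d] h(2)
    by (auto intro: inj_on_subset)
  then have "card (V p {i..j}) = j - i + 1" unfolding V_def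
    using h(1) by (simp add: card_image)
  then have cj: "j - i + 1 = nat (c - a + 1)" using h(3) by simp
  then have jj: "j = i + nat (c - a)" using ac h(1) by linarith
  have L: "i + nat (c - a + 1) \<le> length p" using cj h by linarith
  have e: "{i..<i + nat (c - a + 1)} = {i..j}" using cj h(1) by auto
  show "conserved_in p a c" unfolding conserved_in_def
    apply (rule exI[of _ i])
    using L blk[OF L] e h jj by auto
qed

lemma V_Un: "V p (A \<union> B) = V p A \<union> V p B" by (auto simp: V_def)
lemma V_single: "V p {k} = {\<bar>p!k\<bar>}" by (auto simp: V_def)
lemma V_diff: "distinct (map abs p) \<Longrightarrow> A \<subseteq> {..<length p} \<Longrightarrow> B \<subseteq> {..<length p} \<Longrightarrow> V p (A - B) = V p A - V p B"
  unfolding V_def by (rule inj_on_image_set_diff[OF inj_abs]) auto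
lemma V_Int: "distinct (map abs p) \<Longrightarrow> A \<subseteq> {..<length p} \<Longrightarrow> B \<subseteq> {..<length p} \<Longrightarrow> V p (A \<inter> B) = V p A \<inter> V p B"
  unfolding V_def by (rule inj_on_image_Int[OF inj_abs]) auto
lemma V_mem: "k \<in> S \<Longrightarrow> \<bar>p!k\<bar> \<in> V p S" by (auto simp: V_def)



lemma cin_intro:
  assumes d: "distinct (map abs p)" and "a < c" "i \<le> j" "j < length p" "V p {i..j} = {a..c}"
   "j = i + nat (c - a)" "(p!i = a \<and> p!j = c) \<or> (p!i = -c \<and> p!j = -a)"
  shows "conserved_in p a c"
  using cin_iff[OF d assms(2)] assms by blast

lemma cin_elim:
  assumes d: "distinct (map abs p)" and "a < c" "conserved_in p a c"
  obtains i j where "i \<le> j" "j < length p" "V p {i..j} = {a..c}"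
   "j = i + nat (c - a)" "(p!i = a \<and> p!j = c) \<or> (p!i = -c \<and> p!j = -a)"
  using cin_iff[OF d assms(2)] assms by blast

lemma int_un: "(a::int) \<le> b \<Longrightarrow> b \<le> c \<Longrightarrow> {a..b} \<union> {b..c} = {a..c}" by auto
lemma nat_un: "(a::nat) \<le> b \<Longrightarrow> b \<le> c \<Longrightarrow> {a..b} \<union> {b..c} = {a..c}" by auto

lemma cin_intro2:
  assumes d: "distinct (map abs p)" and ac: "a < c" and h: "i \<le> j" "j < length p" "V p {i..j} = {a..c}"
   "(p!i = a \<and> p!j = c) \<or> (p!i = -c \<and> p!j = -a)"
  shows "conserved_in p a c"
proof -
  have "inj_on (\<lambda>k. \<bar>p!k\<bar>) {i..j}" using inj_abs[OF d] h(2)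
    by (auto intro: inj_on_subset)
  then have "card (V p {i..j}) = j - i + 1" unfolding V_def
    using h(1) by (simp add: card_image)
  then have cj: "j - i + 1 = nat (c - a + 1)" using h(3) by simp
  then have jj: "j = i + nat (c - a)" using ac h(1) by linarith
  show ?thesis using cin_intro[OF d ac h(1,2,3) jj h(4)] .
qed

lemma pA1:
  assumes d: "distinct (map abs p)" and o: "0 < a" "a < b" "b < c"
    and h1: "conserved_in p a b" and h2: "conserved_in p b c"
  shows "conserved_in p a c"
proof -
  have ac0: "a < c" using o by simp
  obtain i1 j1 where b1: "i1 \<le> j1" "j1 < length p" "V p {i1..j1} = {a..b}" "j1 = i1 + nat (b - a)"
     "(p!i1 = a \<and> p!j1 = b) \<or> (p!i1 = -b \<and> p!j1 = -a)"
    by (rule cin_elim[OF d o(2) h1])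
  obtain i2 j2 where b2: "i2 \<le> j2" "j2 < length p" "V p {i2..j2} = {b..c}" "j2 = i2 + nat (c - b)"
     "(p!i2 = b \<and> p!j2 = c) \<or> (p!i2 = -c \<and> p!j2 = -b)"
    by (rule cin_elim[OF d o(3) h2])
  have ip: "\<And>k k'. k < length p \<Longrightarrow> k' < length p \<Longrightarrow> \<bar>p!k\<bar> = \<bar>p!k'\<bar> \<Longrightarrow> k = k'"
    using inj_pos[OF d] by blast
  show ?thesis
  proof (cases "p!i1 = a \<and> p!j1 = b")
    case True
    then have e2: "p!i2 = b \<and> p!j2 = c"
      using b2(5) ip[of j1 j2] b1 b2 o by auto
    have e: "j1 = i2" using ip[of j1 i2] True e2 b1 b2 by auto
    have VV: "V p {i1..j2} = {a..c}" using nat_un[of i1 j1 j2] int_un[of a b c] V_Un[of p "{i1..j1}" "{j1..j2}"]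
      b1 b2 e o by auto
    have "j2 = i1 + nat (c - a)" using b1 b2 e o by auto
    have LL: "i1 \<le> j2" "j2 < length p" using b1 b2 e o by auto
    have EP: "(p!i1 = a \<and> p!j2 = c) \<or> (p!i1 = -c \<and> p!j2 = -a)" using True e2 e o by simp
    show ?thesis by (rule cin_intro2[OF d ac0 LL VV EP])
  next
    case False
    then have F: "p!i1 = -b \<and> p!j1 = -a" using b1 by auto
    then have e2: "p!i2 = -c \<and> p!j2 = -b"
      using b2(5) ip[of i1 i2] b1 b2 o by auto
    have e: "j2 = i1" using ip[of j2 i1] F e2 b1 b2 by auto
    have VV: "V p {i2..j1} = {a..c}" using nat_un[of i2 j2 j1] int_un[of a b c] V_Un[of p "{i2..j2}" "{j2..j1}"]
      b1 b2 e o by auto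
    have "j1 = i2 + nat (c - a)" using b1 b2 e o by auto
    have LL: "i2 \<le> j1" "j1 < length p" using b1 b2 e o by auto
    have EP: "(p!i2 = a \<and> p!j1 = c) \<or> (p!i2 = -c \<and> p!j1 = -a)" using F e2 e o by simp
    show ?thesis by (rule cin_intro2[OF d ac0 LL VV EP])
  qed
qed

lemma int_diff: "(a::int) < b \<Longrightarrow> b < c \<Longrightarrow> ({a..c} - {a..b}) \<union> {b} = {b..c}" by auto
lemma int_diff2: "(a::int) < b \<Longrightarrow> b < c \<Longrightarrow> ({a..c} - {b..c}) \<union> {b} = {a..b}" by auto

lemma pA2:
  assumes d: "distinct (map abs p)" and o: "0 < a" "a < b" "b < c"
    and h1: "conserved_in p a c" and h2: "conserved_in p a b"
  shows "conserved_in p b c"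
proof -
  have acX: "a < c" using o by simp
  obtain i j where b1: "i \<le> j" "j < length p" "V p {i..j} = {a..c}" "j = i + nat (c - a)"
     "(p!i = a \<and> p!j = c) \<or> (p!i = -c \<and> p!j = -a)"
    by (rule cin_elim[OF d acX h1])
  obtain i' j' where b2: "i' \<le> j'" "j' < length p" "V p {i'..j'} = {a..b}" "j' = i' + nat (b - a)"
     "(p!i' = a \<and> p!j' = b) \<or> (p!i' = -b \<and> p!j' = -a)"
    by (rule cin_elim[OF d o(2) h2])
  have ip: "\<And>k k'. k < length p \<Longrightarrow> k' < length p \<Longrightarrow> \<bar>p!k\<bar> = \<bar>p!k'\<bar> \<Longrightarrow> k = k'"
    using inj_pos[OF d] by blast
  have bc: "b < c" using o by simp
  show ?thesis
  proof (cases "p!i = a \<and> p!j = c")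
    case True
    then have e2: "p!i' = a \<and> p!j' = b"
      using b2(5) ip[of i j'] b1 b2 o by auto
    have e: "i' = i" using ip[of i' i] True e2 b1 b2 by auto
    have r: "{j'..j} = ({i..j} - {i..j'}) \<union> {j'}" using b1 b2 e o by auto
    have VV: "V p {j'..j} = {b..c}" unfolding r V_Un V_single
      apply (subst V_diff[OF d]) using b1 b2 e e2 o int_diff[of a b c] by auto
    have "j = j' + nat (c - b)" using b1 b2 e o by auto
    have "j' \<le> j" using b1 b2 e o by auto
    have LL: "j' \<le> j" "j < length p" using b1 b2 e o by auto
    have EP: "(p!j' = b \<and> p!j = c) \<or> (p!j' = -c \<and> p!j = -b)" using True e2 e o by simp
    show ?thesis by (rule cin_intro2[OF d bc LL VV EP])
  next
    case False
    then have F: "p!i = -c \<and> p!j = -a" using b1 by auto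
    then have e2: "p!i' = -b \<and> p!j' = -a"
      using b2(5) ip[of j i'] b1 b2 o by auto
    have e: "j' = j" using ip[of j' j] F e2 b1 b2 by auto
    have r: "{i..i'} = ({i..j} - {i'..j}) \<union> {i'}" using b1 b2 e o by auto
    have VV: "V p {i..i'} = {b..c}" unfolding r V_Un V_single
      apply (subst V_diff[OF d]) using b1 b2 e e2 o int_diff[of a b c] by auto
    have "i' = i + nat (c - b)" using b1 b2 e o by auto
    have "i \<le> i'" using b1 b2 e o by auto
    have LL: "i \<le> i'" "i' < length p" using b1 b2 e o by auto
    have EP: "(p!i = b \<and> p!i' = c) \<or> (p!i = -c \<and> p!i' = -b)" using F e2 e o by simp
    show ?thesis by (rule cin_intro2[OF d bc LL VV EP])
  qed
qed

lemma pA3: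
  assumes d: "distinct (map abs p)" and o: "0 < a" "a < b" "b < c"
    and h1: "conserved_in p a c" and h2: "conserved_in p b c"
  shows "conserved_in p a b"
proof -
  have acX: "a < c" using o by simp
  obtain i j where b1: "i \<le> j" "j < length p" "V p {i..j} = {a..c}" "j = i + nat (c - a)"
     "(p!i = a \<and> p!j = c) \<or> (p!i = -c \<and> p!j = -a)"
    by (rule cin_elim[OF d acX h1])
  obtain i' j' where b2: "i' \<le> j'" "j' < length p" "V p {i'..j'} = {b..c}" "j' = i' + nat (c - b)"
     "(p!i' = b \<and> p!j' = c) \<or> (p!i' = -c \<and> p!j' = -b)"
    by (rule cin_elim[OF d o(3) h2])
  have ip: "\<And>k k'. k < length p \<Longrightarrow> k' < length p \<Longrightarrow> \<bar>p!k\<bar> = \<bar>p!k'\<bar> \<Longrightarrow> k = k'"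
    using inj_pos[OF d] by blast
  have ab: "a < b" using o by simp
  show ?thesis
  proof (cases "p!i = a \<and> p!j = c")
    case True
    then have e2: "p!i' = b \<and> p!j' = c"
      using b2(5) ip[of j i'] b1 b2 o by auto
    have e: "j' = j" using ip[of j' j] True e2 b1 b2 by auto
    have r: "{i..i'} = ({i..j} - {i'..j}) \<union> {i'}" using b1 b2 e o by auto
    have VV: "V p {i..i'} = {a..b}" unfolding r V_Un V_single
      apply (subst V_diff[OF d]) using b1 b2 e e2 o int_diff2[of a b c] by auto
    have "i' = i + nat (b - a)" using b1 b2 e o by auto
    have "i \<le> i'" using b1 b2 e o by auto
    have LL: "i \<le> i'" "i' < length p" using b1 b2 e o by auto
    have EP: "(p!i = a \<and> p!i' = b) \<or> (p!i = -b \<and> p!i' = -a)" using True e2 e o by simp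
    show ?thesis by (rule cin_intro2[OF d ab LL VV EP])
  next
    case False
    then have F: "p!i = -c \<and> p!j = -a" using b1 by auto
    then have e2: "p!i' = -c \<and> p!j' = -b"
      using b2(5) ip[of i j'] b1 b2 o by auto
    have e: "i' = i" using ip[of i' i] F e2 b1 b2 by auto
    have r: "{j'..j} = ({i..j} - {i..j'}) \<union> {j'}" using b1 b2 e o by auto
    have VV: "V p {j'..j} = {a..b}" unfolding r V_Un V_single
      apply (subst V_diff[OF d]) using b1 b2 e e2 o int_diff2[of a b c] by auto
    have "j = j' + nat (b - a)" using b1 b2 e o by auto
    have "j' \<le> j" using b1 b2 e o by auto
    have LL: "j' \<le> j" "j < length p" using b1 b2 e o by auto
    have EP: "(p!j' = a \<and> p!j = b) \<or> (p!j' = -b \<and> p!j = -a)" using F e2 e o by simp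
    show ?thesis by (rule cin_intro2[OF d ab LL VV EP])
  qed
qed

lemma pA4:
  assumes d: "distinct (map abs p)" and o: "0 < a" "a < b" "b < c" "c < d"
    and h1: "conserved_in p a c" and h2: "conserved_in p b d"
  shows "conserved_in p a b \<and> conserved_in p c d"
proof -
  have ac0: "a < c" and bd0: "b < d" using o by simp_all
  obtain i1 j1 where b1: "i1 \<le> j1" "j1 < length p" "V p {i1..j1} = {a..c}" "j1 = i1 + nat (c - a)"
     "(p!i1 = a \<and> p!j1 = c) \<or> (p!i1 = -c \<and> p!j1 = -a)"
    by (rule cin_elim[OF d ac0 h1])
  obtain i2 j2 where b2: "i2 \<le> j2" "j2 < length p" "V p {i2..j2} = {b..d}" "j2 = i2 + nat (d - b)"
     "(p!i2 = b \<and> p!j2 = d) \<or> (p!i2 = -d \<and> p!j2 = -b)"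
    by (rule cin_elim[OF d bd0 h2])
  have ip: "\<And>k k'. k < length p \<Longrightarrow> k' < length p \<Longrightarrow> \<bar>p!k\<bar> = \<bar>p!k'\<bar> \<Longrightarrow> k = k'"
    using inj_pos[OF d] by blast
  have ab: "a < b" and cd: "c < d" using o by simp_all
  have c2: "c \<in> V p {i2..j2}" using b2(3) o by simp
  then obtain k where k: "k \<in> {i2..j2}" "\<bar>p!k\<bar> = c" unfolding V_def by auto
  have vin: "\<And>k i j. k \<in> {i..j} \<Longrightarrow> \<bar>p!k\<bar> \<in> V p {i..j}" by (rule V_mem)
  have s1: "{i1..j1} \<subseteq> {..<length p}" "{i2..j2} \<subseteq> {..<length p}" using b1(2) b2(2) by auto
  have s3: "{i1..j1} \<inter> {i2..j2} \<subseteq> {..<length p}" using s1 by blast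
  have "V p ({i1..j1} \<inter> {i2..j2}) = V p {i1..j1} \<inter> V p {i2..j2}" using V_Int[OF d s1] .
  also have "\<dots> = {a..c} \<inter> {b..d}" using b1(3) b2(3) by simp
  also have "\<dots> = {b..c}" using o by auto
  finally have I: "V p ({i1..j1} \<inter> {i2..j2}) = {b..c}" .
  have kl: "k < length p" using k b2(2) by simp
  show ?thesis
  proof (cases "p!i1 = a \<and> p!j1 = c")
    case True
    have kj: "k = j1" using ip[OF kl b1(2)] k(2) True by simp
    have "\<bar>p!i1\<bar> = a" using True o by simp
    then have "i1 \<notin> {i2..j2}" using vin[of i1 i2 j2] b2(3) o by auto
    then have pos: "i1 < i2" "i2 \<le> j1" "j1 \<le> j2" using k kj b1(1) by auto
    have "i2 \<in> {i1..j1}" using pos by auto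
    then have "\<bar>p!i2\<bar> \<in> {a..c}" using vin[of i2 i1 j1] b1(3) by simp
    then have e2: "p!i2 = b \<and> p!j2 = d" using b2(5) o by auto
    have r1: "{i1..i2} = ({i1..j1} - ({i1..j1} \<inter> {i2..j2})) \<union> {i2}" using pos by auto
    have r2: "{j1..j2} = ({i2..j2} - ({i1..j1} \<inter> {i2..j2})) \<union> {j1}" using pos by auto
    have "V p {i1..i2} = (V p {i1..j1} - V p ({i1..j1} \<inter> {i2..j2})) \<union> {\<bar>p!i2\<bar>}"
      unfolding r1 V_Un V_single V_diff[OF d s1(1) s3] ..
    also have "\<dots> = ({a..c} - {b..c}) \<union> {b}" using b1(3) I e2 o by simp
    also have "\<dots> = {a..b}" using o by auto
    finally have v1: "V p {i1..i2} = {a..b}" .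
    have "V p {j1..j2} = (V p {i2..j2} - V p ({i1..j1} \<inter> {i2..j2})) \<union> {\<bar>p!j1\<bar>}"
      unfolding r2 V_Un V_single V_diff[OF d s1(2) s3] ..
    also have "\<dots> = ({b..d} - {b..c}) \<union> {c}" using b2(3) I True o by simp
    also have "\<dots> = {c..d}" using o by auto
    finally have v2: "V p {j1..j2} = {c..d}" .
    have l1: "i1 \<le> i2" "i2 < length p" using pos b2 by auto
    have l2: "j1 \<le> j2" "j2 < length p" using pos b2 by auto
    have "conserved_in p a b" using True e2 o by (intro cin_intro2[OF d ab l1 v1]) simp
    moreover have "conserved_in p c d" using True e2 o by (intro cin_intro2[OF d cd l2 v2]) simp
    ultimately show ?thesis ..
  next
    case False
    then have F: "p!i1 = -c \<and> p!j1 = -a" using b1(5) by blast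
    have i1l: "i1 < length p" using b1(1,2) by simp
    have ai: "\<bar>p!i1\<bar> = c" using F o by simp
    have kj: "k = i1" using ip[OF kl i1l] k(2) ai by simp
    have "\<bar>p!j1\<bar> = a" using F o by simp
    then have "j1 \<notin> {i2..j2}" using vin[of j1 i2 j2] b2(3) o by auto
    then have pos: "i2 \<le> i1" "i1 \<le> j2" "j2 < j1" using k kj b1(1) by auto
    have "j2 \<in> {i1..j1}" using pos by auto
    then have "\<bar>p!j2\<bar> \<in> {a..c}" using vin[of j2 i1 j1] b1(3) by simp
    then have e2: "p!i2 = -d \<and> p!j2 = -b" using b2(5) o by auto
    have r1: "{j2..j1} = ({i1..j1} - ({i1..j1} \<inter> {i2..j2})) \<union> {j2}" using pos by auto
    have r2: "{i2..i1} = ({i2..j2} - ({i1..j1} \<inter> {i2..j2})) \<union> {i1}" using pos by auto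
    have "V p {j2..j1} = (V p {i1..j1} - V p ({i1..j1} \<inter> {i2..j2})) \<union> {\<bar>p!j2\<bar>}"
      unfolding r1 V_Un V_single V_diff[OF d s1(1) s3] ..
    also have "\<dots> = ({a..c} - {b..c}) \<union> {b}" using b1(3) I e2 o by simp
    also have "\<dots> = {a..b}" using o by auto
    finally have v1: "V p {j2..j1} = {a..b}" .
    have "V p {i2..i1} = (V p {i2..j2} - V p ({i1..j1} \<inter> {i2..j2})) \<union> {\<bar>p!i1\<bar>}"
      unfolding r2 V_Un V_single V_diff[OF d s1(2) s3] ..
    also have "\<dots> = ({b..d} - {b..c}) \<union> {c}" using b2(3) I F o by simp
    also have "\<dots> = {c..d}" using o by auto
    finally have v2: "V p {i2..i1} = {c..d}" .
    have l1: "j2 \<le> j1" "j1 < length p" using pos b1 by auto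
    have l2: "i2 \<le> i1" "i1 < length p" using pos b1 by auto
    have "conserved_in p a b" using F e2 o by (intro cin_intro2[OF d ab l1 v1]) simp
    moreover have "conserved_in p c d" using F e2 o by (intro cin_intro2[OF d cd l2 v2]) simp
    ultimately show ?thesis ..
  qed
qed



locale cl =
  fixes n :: nat and Ps :: "int list list"
  assumes dist: "\<forall>p\<in>set Ps. distinct (map abs p)"
begin

abbreviation C where "C x y \<equiv> conserved n Ps {x..y}"

lemma consC: "x < y \<Longrightarrow> C x y \<longleftrightarrow> 1 \<le> x \<and> y \<le> int n \<and> (\<forall>p\<in>set Ps. conserved_in p x y)"
  unfolding conserved_def
  apply (rule iffI)
   apply (elim disjE exE)
    apply (metis atLeastAtMost_singleton_iff not_less_iff_gr_or_eq)
   apply (metis Icc_eq_Icc order.strict_iff_not)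
  by blast

lemma cons_single: "C x x \<longleftrightarrow> 1 \<le> x \<and> x \<le> int n"
  unfolding conserved_def by auto

lemma cons_shape: "conserved n Ps I \<Longrightarrow> \<exists>x y. x \<le> y \<and> I = {x..y} \<and> 1 \<le> x \<and> y \<le> int n"
  unfolding conserved_def by (metis atLeastAtMost_singleton order.order_iff_strict order_refl)

lemma C_bounds: "x \<le> y \<Longrightarrow> C x y \<Longrightarrow> 1 \<le> x \<and> y \<le> int n"
  by (metis consC cons_single order.order_iff_strict)

lemma CA1: "x \<le> y \<Longrightarrow> y \<le> z \<Longrightarrow> C x y \<Longrightarrow> C y z \<Longrightarrow> C x z"
proof -
  assume a: "x \<le> y" "y \<le> z" "C x y" "C y z"
  show "C x z"
  proof (cases "x = y \<or> y = z")
    case True then show ?thesis using a by auto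
  next
    case False
    then have l: "x < y" "y < z" using a by auto
    have b: "1 \<le> x" "z \<le> int n" using C_bounds a by (meson order.trans)+
    show ?thesis using l a b dist pA1[of _ x y z] consC by auto
  qed
qed

lemma CA2: "x \<le> y \<Longrightarrow> y \<le> z \<Longrightarrow> C x z \<Longrightarrow> C x y \<Longrightarrow> C y z"
proof -
  assume a: "x \<le> y" "y \<le> z" "C x z" "C x y"
  have b: "1 \<le> x" "z \<le> int n" using C_bounds a by (meson order.trans)+
  show "C y z"
  proof (cases "x = y \<or> y = z")
    case True then show ?thesis using a b cons_single by auto
  next
    case False
    then have l: "x < y" "y < z" using a by auto
    show ?thesis using l a b dist pA2[of _ x y z] consC by auto
  qed
qed

lemma CA3: "x \<le> y \<Longrightarrow> y \<le> z \<Longrightarrow> C x z \<Longrightarrow> C y z \<Longrightarrow> C x y"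
proof -
  assume a: "x \<le> y" "y \<le> z" "C x z" "C y z"
  have b: "1 \<le> x" "z \<le> int n" using C_bounds a by (meson order.trans)+
  show "C x y"
  proof (cases "x = y \<or> y = z")
    case True then show ?thesis using a b cons_single by auto
  next
    case False
    then have l: "x < y" "y < z" using a by auto
    show ?thesis using l a b dist pA3[of _ x y z] consC by auto
  qed
qed

lemma CA4: "a < b \<Longrightarrow> b < c \<Longrightarrow> c < d \<Longrightarrow> C a c \<Longrightarrow> C b d \<Longrightarrow> C a b \<and> C c d"
proof -
  assume a: "a < b" "b < c" "c < d" "C a c" "C b d"
  have b: "1 \<le> a" "d \<le> int n" using C_bounds a by (meson order.trans less_imp_le)+
  show ?thesis using a b dist pA4[of _ a b c d] consC by auto
qed

definition FJ where "FJ a c = {x. a \<le> x \<and> x \<le> c \<and> C a x \<and> C x c}"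

lemma Caa: "a \<le> c \<Longrightarrow> C a c \<Longrightarrow> C a a \<and> C c c"
  using C_bounds cons_single by force

lemma mm: "(a::int) \<le> c \<Longrightarrow> Min {a..c} = a \<and> Max {a..c} = c"
  by (simp add: Max_eq_iff Min_eq_iff)

lemma FJ_ends: "a \<le> c \<Longrightarrow> C a c \<Longrightarrow> a \<in> FJ a c \<and> c \<in> FJ a c"
  using Caa unfolding FJ_def by auto

lemma front_sub: "a \<le> c \<Longrightarrow> C a c \<Longrightarrow> is_frontiers n Ps {a..c} G \<Longrightarrow> G \<subseteq> FJ a c"
proof
  fix g assume a: "a \<le> c" "C a c" "is_frontiers n Ps {a..c} G" "g \<in> G"
  then have G: "G \<subseteq> {a..c}" "a \<in> G" "c \<in> G" "\<forall>x\<in>G. \<forall>y\<in>G. x < y \<longrightarrow> C x y"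
    unfolding is_frontiers_def using mm[of a c] by auto
  have "C a g" using G a Caa[of a c] by (cases "a = g") auto
  moreover have "C g c" using G a Caa[of a c] by (cases "g = c") auto
  ultimately show "g \<in> FJ a c" using G a unfolding FJ_def by auto
qed

lemma FJ_front: "a \<le> c \<Longrightarrow> C a c \<Longrightarrow> is_frontiers n Ps {a..c} (FJ a c)"
  unfolding is_frontiers_def using FJ_ends[of a c] CA2 mm[of a c] unfolding FJ_def by auto

lemma mf: "a \<le> c \<Longrightarrow> C a c \<Longrightarrow> max_frontiers n Ps {a..c} = FJ a c"
  unfolding max_frontiers_def
  apply (rule the_equality)
  using FJ_front front_sub apply blast
  using FJ_front front_sub by blast

definition consec :: "int set \<Rightarrow> int \<Rightarrow> int \<Rightarrow> bool" where
  "consec F x y \<longleftrightarrow> x \<in> F \<and> y \<in> F \<and> x < y \<and> (\<forall>z\<in>F. \<not> (x < z \<and> z < y))"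

lemma bg: "a \<le> c \<Longrightarrow> C a c \<Longrightarrow> bgaps n Ps b {a..c} = {(x,y). consec (FJ a c) x y \<and> y - x > int b}"
  unfolding bgaps_def mf consec_def Let_def by auto

lemma FJ_sub: "p \<in> FJ a c \<Longrightarrow> q \<in> FJ a c \<Longrightarrow> p \<le> q \<Longrightarrow> FJ p q = FJ a c \<inter> {p..q}"
proof -
  assume h: "p \<in> FJ a c" "q \<in> FJ a c" "p \<le> q"
  then have h2: "a \<le> p" "q \<le> c" "C a p" "C p c" "C a q" "C q c" unfolding FJ_def by auto
  show ?thesis
  proof (intro set_eqI iffI)
    fix x assume "x \<in> FJ p q"
    then have x: "p \<le> x" "x \<le> q" "C p x" "C x q" unfolding FJ_def by auto
    have "C a x" using CA1[of a p x] x h2 by auto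
    moreover have "C x c" using CA1[of x q c] x h2 by auto
    ultimately show "x \<in> FJ a c \<inter> {p..q}" using x h2 unfolding FJ_def by auto
  next
    fix x assume "x \<in> FJ a c \<inter> {p..q}"
    then have x: "p \<le> x" "x \<le> q" "C a x" "C x c" unfolding FJ_def by auto
    have "C p x" using CA2[of a p x] x h2 by auto
    moreover have "C x q" using CA3[of x q c] x h2 by auto
    ultimately show "x \<in> FJ p q" using x unfolding FJ_def by auto
  qed
qed

end

context cl begin
lemma FJ_fin: "finite (FJ a c)" unfolding FJ_def
  by (rule finite_subset[of _ "{a..c}"]) auto

lemma FJ_mem: "x \<in> FJ a c \<Longrightarrow> a \<le> x \<and> x \<le> c \<and> C a x \<and> C x c" unfolding FJ_def by auto

lemma consec_sub: "consec G x y \<Longrightarrow> G = F \<inter> {p..q} \<Longrightarrow> consec F x y"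
proof -
  assume h0: "consec G x y" and e: "G = F \<inter> {p..q}"
  then have h: "consec (F \<inter> {p..q}) x y" by simp
  then have m: "x \<in> F" "y \<in> F" "x < y" "p \<le> x" "y \<le> q" unfolding consec_def by auto
  have "\<forall>z\<in>F. \<not> (x < z \<and> z < y)"
  proof (intro ballI notI)
    fix z assume "z \<in> F" "x < z \<and> z < y"
    then have "z \<in> F \<inter> {p..q}" using m by auto
    then show False using h \<open>x < z \<and> z < y\<close> unfolding consec_def by auto
  qed
  then show ?thesis using m unfolding consec_def by auto
qed

lemma peel: "\<forall>a c. nat ((u - a) + (c - v)) = m \<longrightarrow> a \<le> c \<longrightarrow> C a c \<longrightarrow> a \<le> u \<longrightarrow> u \<le> v \<longrightarrow> v \<le> c
   \<longrightarrow> u \<in> FJ a c \<longrightarrow> v \<in> FJ a c \<longrightarrow> bnested n Ps b {u..v}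
   \<longrightarrow> (\<forall>x y. consec (FJ a c) x y \<and> (y \<le> u \<or> v \<le> x) \<longrightarrow> y - x \<le> int b)
   \<longrightarrow> bnested n Ps b {a..c}"
proof (induction m rule: less_induct)
  case (less m)
  show ?case
  proof (intro allI impI)
    fix a c
    assume m: "nat ((u - a) + (c - v)) = m" and ac: "a \<le> c" "C a c" and uv: "a \<le> u" "u \<le> v" "v \<le> c"
      and fu: "u \<in> FJ a c" "v \<in> FJ a c" and bn: "bnested n Ps b {u..v}"
      and gp: "\<forall>x y. consec (FJ a c) x y \<and> (y \<le> u \<or> v \<le> x) \<longrightarrow> y - x \<le> int b"
    have aF: "a \<in> FJ a c" "c \<in> FJ a c" using FJ_ends ac by auto
    show "bnested n Ps b {a..c}"
    proof (cases "v < c")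
      case True
      define S where "S = {z\<in>FJ a c. z < c}"
      have Sf: "finite S" "v \<in> S" unfolding S_def using FJ_fin fu True by auto
      define f where "f = Max S"
      have f: "f \<in> FJ a c" "f < c" "v \<le> f" using Max_in[OF Sf(1)] Max_ge[OF Sf] Sf unfolding f_def S_def
        by blast+
      have fc: "consec (FJ a c) f c"
        unfolding consec_def using f aF Max_ge[OF Sf(1)] unfolding S_def f_def by force
      have cf: "c - f \<le> int b" using gp fc f by auto
      have FJs: "FJ a f = FJ a c \<inter> {a..f}" using FJ_sub[OF aF(1) f(1)] FJ_mem[OF f(1)] by auto
      have Caf: "C a f" "a \<le> f" using FJ_mem[OF f(1)] by auto
      have hyp: "\<forall>x y. consec (FJ a f) x y \<and> (y \<le> u \<or> v \<le> x) \<longrightarrow> y - x \<le> int b"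
      proof (intro allI impI)
        fix x y
        assume a1: "consec (FJ a f) x y \<and> (y \<le> u \<or> v \<le> x)"
        have "consec (FJ a c) x y" using conjunct1[OF a1] FJs by (rule consec_sub)
        then show "y - x \<le> int b" using gp a1 by auto
      qed
      have lt: "nat ((u - a) + (f - v)) < m" using m f True uv by linarith
      have uF: "u \<in> FJ a f" "v \<in> FJ a f" using FJs fu uv f by auto
      have IH: "bnested n Ps b {a..f}"
        using less.IH[OF lt, rule_format, of a f] Caf uv f uF bn hyp by auto
      show ?thesis
        apply (rule bnested.step[OF ac(2) IH])
        using f Caf cf by auto
    next
      case False
      then have vc: "v = c" using uv by auto
      show ?thesis
      proof (cases "a < u")
        case True
        define S where "S = {z\<in>FJ a c. a < z}"
        have Sf: "finite S" "u \<in> S" unfolding S_def using FJ_fin fu True by auto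
        define f where "f = Min S"
        have f: "f \<in> FJ a c" "a < f" "f \<le> u" using Min_in[OF Sf(1)] Min_le[OF Sf] Sf unfolding f_def S_def
          by blast+
        have fc: "consec (FJ a c) a f"
          unfolding consec_def using f aF Min_le[OF Sf(1)] unfolding S_def f_def by force
        have cf: "f - a \<le> int b" using gp fc f by auto
        have FJs: "FJ f c = FJ a c \<inter> {f..c}" using FJ_sub[OF f(1) aF(2)] FJ_mem[OF f(1)] by auto
        have Caf: "C f c" "f \<le> c" using FJ_mem[OF f(1)] by auto
        have hyp: "\<forall>x y. consec (FJ f c) x y \<and> (y \<le> u \<or> v \<le> x) \<longrightarrow> y - x \<le> int b"
        proof (intro allI impI)
          fix x y
          assume a1: "consec (FJ f c) x y \<and> (y \<le> u \<or> v \<le> x)"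
          have "consec (FJ a c) x y" using conjunct1[OF a1] FJs by (rule consec_sub)
          then show "y - x \<le> int b" using gp a1 by auto
        qed
        have lt: "nat ((u - f) + (c - v)) < m" using m f True uv by linarith
        have uF: "u \<in> FJ f c" "v \<in> FJ f c" using FJs fu uv f by auto
        have IH: "bnested n Ps b {f..c}"
          using less.IH[OF lt, rule_format, of f c] Caf uv f uF bn hyp by auto
        show ?thesis
          apply (rule bnested.step[OF ac(2) IH])
          using f Caf cf by auto
      next
        case False
        then show ?thesis using vc uv bn by auto
      qed
    qed
  qed
qed

end

context cl begin
lemma bn_cons: "bnested n Ps b I \<Longrightarrow> conserved n Ps I"
  by (induction rule: bnested.induct) auto

lemma card_ivl: "card {x..y::int} = nat (y - x + 1)" by simp

lemma caseB:
  assumes ap: "a \<le> p" and pq: "p \<le> q" and qc: "q \<le> c" and Cac: "C a c" and Cpq: "C p q"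
    and bnI: "bnested n Ps b {p..q}" and sz: "(p - a) + (c - q) \<le> int b"
    and pF: "p \<notin> FJ a c" and qF: "q \<notin> FJ a c"
  shows "bgaps n Ps b {a..c} = {} \<or> (\<exists>g. bgaps n Ps b {a..c} = {g} \<and> good_gap n Ps b g)"
proof -
  have ac: "a \<le> c" using ap pq qc by auto
  have aF: "a \<in> FJ a c" "c \<in> FJ a c" using FJ_ends[OF ac Cac] by auto
  have apl: "a < p" using aF pF ap by (cases "a = p") auto
  have qcl: "q < c" using aF qF qc by (cases "q = c") auto
  have noF: "\<And>f. f \<in> FJ a c \<Longrightarrow> p \<le> f \<Longrightarrow> f \<le> q \<Longrightarrow> False"
  proof -
    fix f assume f: "f \<in> FJ a c" "p \<le> f" "f \<le> q"
    have "f \<noteq> p" "f \<noteq> q" using f pF qF by auto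
    then have l: "p < f" "f < q" using f by auto
    have "C a p" using CA4[of a p f q] l apl FJ_mem[OF f(1)] Cpq by auto
    then have "p \<in> FJ a c" using CA2[of a p c] apl qcl pq Cac unfolding FJ_def by auto
    then show False using pF by simp
  qed
  define S1 where "S1 = {z\<in>FJ a c. z < p}"
  have S1f: "finite S1" "a \<in> S1" unfolding S1_def using FJ_fin aF apl by auto
  define x where "x = Max S1"
  have x: "x \<in> FJ a c" "x < p" "\<And>z. z \<in> FJ a c \<Longrightarrow> z < p \<Longrightarrow> z \<le> x"
    using Max_in[OF S1f(1)] Max_ge[OF S1f(1)] S1f unfolding x_def S1_def by blast+
  define S2 where "S2 = {z\<in>FJ a c. q < z}"
  have S2f: "finite S2" "c \<in> S2" unfolding S2_def using FJ_fin aF qcl by auto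
  define y where "y = Min S2"
  have y: "y \<in> FJ a c" "q < y" "\<And>z. z \<in> FJ a c \<Longrightarrow> q < z \<Longrightarrow> y \<le> z"
    using Min_in[OF S2f(1)] Min_le[OF S2f(1)] S2f unfolding y_def S2_def by blast+
  have xr: "a \<le> x" "y \<le> c" "C a x" "C x c" "C a y" "C y c" using FJ_mem x(1) y(1) by auto
  have btw: "\<And>z. z \<in> FJ a c \<Longrightarrow> x < z \<Longrightarrow> z < y \<Longrightarrow> False"
  proof -
    fix z assume z: "z \<in> FJ a c" "x < z" "z < y"
    show False
    proof (cases "z < p")
      case True then show ?thesis using x(3)[OF z(1)] z by auto
    next
      case False
      show ?thesis
      proof (cases "q < z")
        case True then show ?thesis using y(3)[OF z(1)] z by auto
      next
        case False
        then show ?thesis using noF[OF z(1)] \<open>\<not> z < p\<close> by auto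
      qed
    qed
  qed
  have cxy: "consec (FJ a c) x y" unfolding consec_def using x y btw pq by force
  have only: "\<And>x' y'. consec (FJ a c) x' y' \<Longrightarrow> y' - x' > int b \<Longrightarrow> x' = x \<and> y' = y"
  proof -
    fix x' y' assume c': "consec (FJ a c) x' y'" and g: "y' - x' > int b"
    have m: "x' \<in> FJ a c" "y' \<in> FJ a c" "x' < y'" "\<And>z. z \<in> FJ a c \<Longrightarrow> x' < z \<Longrightarrow> z < y' \<Longrightarrow> False"
      using c' unfolding consec_def by auto
    have r: "a \<le> x'" "y' \<le> c" using FJ_mem m by auto
    have "\<not> y' < p" using r g sz pq ap qc by linarith
    then have "q < y'" using noF[OF m(2)] by fastforce
    have "\<not> q < x'" using r g sz pq ap qc by linarith
    then have "x' < p" using noF[OF m(1)] by fastforce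
    have "x' \<le> x" using x(3)[OF m(1) \<open>x' < p\<close>] .
    moreover have "\<not> x' < x" using m(4)[OF x(1)] x(2) \<open>q < y'\<close> pq by auto
    moreover have "y \<le> y'" using y(3)[OF m(2) \<open>q < y'\<close>] .
    moreover have "\<not> y < y'" using m(4)[OF y(1)] y(2) \<open>x' < p\<close> pq by auto
    ultimately show "x' = x \<and> y' = y" by auto
  qed
  have bgE: "bgaps n Ps b {a..c} = {(x', y'). consec (FJ a c) x' y' \<and> y' - x' > int b}"
    using bg[OF ac Cac] by simp
  show ?thesis
  proof (cases "y - x > int b")
    case False
    have "bgaps n Ps b {a..c} = {}"
    proof (rule equals0I)
      fix z assume "z \<in> bgaps n Ps b {a..c}"
      then obtain x' y' where z: "z = (x',y')" "consec (FJ a c) x' y'" "y' - x' > int b"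
        unfolding bgE by auto
      then show False using only[OF z(2,3)] False by auto
    qed
    then show ?thesis by simp
  next
    case True
    have bgs: "bgaps n Ps b {a..c} = {(x,y)}"
    proof (intro equalityI subsetI)
      fix z assume "z \<in> bgaps n Ps b {a..c}"
      then obtain x' y' where z: "z = (x',y')" "consec (FJ a c) x' y'" "y' - x' > int b"
        unfolding bgE by auto
      then show "z \<in> {(x,y)}" using only[OF z(2,3)] by auto
    next
      fix z assume "z \<in> {(x,y)}"
      then show "z \<in> bgaps n Ps b {a..c}" unfolding bgE using cxy True by auto
    qed
    define S where "S = {K. conserved n Ps K \<and> bnested n Ps b K \<and> {p..q} \<subseteq> K \<and> K \<subseteq> {x+1..y-1}}"
    have Sfin: "finite S" unfolding S_def
      by (rule finite_subset[of _ "Pow {x+1..y-1}"]) auto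
    have IS: "{p..q} \<in> S" unfolding S_def using Cpq bnI x y by auto
    define M where "M = Max (card ` S)"
    have "M \<in> card ` S" unfolding M_def using Sfin IS by (intro Max_in) auto
    then obtain K where K: "K \<in> S" "card K = M" by auto
    have Kmax: "\<And>K'. K' \<in> S \<Longrightarrow> card K' \<le> card K" using K Sfin unfolding M_def by auto
    have Kc: "conserved n Ps K" "bnested n Ps b K" "{p..q} \<subseteq> K" "K \<subseteq> {x+1..y-1}" using K(1) unfolding S_def by auto
    obtain p' q' where pq': "p' \<le> q'" "K = {p'..q'}" using cons_shape[OF Kc(1)] by auto
    have pos: "x + 1 \<le> p'" "p' \<le> p" "q \<le> q'" "q' \<le> y - 1" using Kc(3,4) pq' pq by auto
    have Cpq': "C p' q'" using Kc(1) pq' by simp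
    have p'F: "p' \<notin> FJ a c" using btw[of p'] pos pq by auto
    have q'F: "q' \<notin> FJ a c" using btw[of q'] pos pq by auto
    have cardK: "int (card K) \<ge> y - x + 1 - int b"
    proof -
      have "card {p..q} \<le> card K" using Kmax IS .
      then have "q - p + 1 \<le> int (card K)" using pq by simp
      then show ?thesis using sz xr by linarith
    qed
    have cardK2: "int (card K) = q' - p' + 1" using pq' by simp
    have grow: "\<And>r s. C r s \<Longrightarrow> x + 1 \<le> r \<Longrightarrow> r \<le> p' \<Longrightarrow> q' \<le> s \<Longrightarrow> s \<le> y - 1 \<Longrightarrow> {p'..q'} \<subset> {r..s} \<Longrightarrow> False"
    proof -
      fix r s assume h: "C r s" "x + 1 \<le> r" "r \<le> p'" "q' \<le> s" "s \<le> y - 1" "{p'..q'} \<subset> {r..s}"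
      have "bnested n Ps b {r..s}"
        apply (rule bnested.step[OF h(1) Kc(2)])
        using h pq' apply simp
        using h cardK cardK2 pq' by (simp add: nat_le_iff)
      then have "{r..s} \<in> S" unfolding S_def using h pos bn_cons by auto
      then have "card {r..s} \<le> card K" using Kmax by blast
      moreover have "card K < card {r..s}" using psubset_card_mono[OF finite_atLeastAtMost_int h(6)] pq'(2) by simp
      ultimately show False by simp
    qed
    have strong: "strong n Ps K"
      unfolding strong_def
    proof (intro conjI allI impI)
      show "conserved n Ps K" by fact
      show "2 \<le> card K" using cardK True by linarith
    next
      fix L assume L: "conserved n Ps L"
      obtain r s where rs: "r \<le> s" "L = {r..s}" using cons_shape[OF L] by auto
      have Crs: "C r s" using L rs by simp
      show "\<not> overlap K L"
      proof
        assume "overlap K L"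
        then have ov: "(p' < r \<and> r \<le> q' \<and> q' < s) \<or> (r < p' \<and> p' \<le> s \<and> s < q')"
          unfolding overlap_def using pq'(2) rs(2) mm[OF pq'(1)] mm[OF rs(1)] by simp
        then show False
        proof
          assume o: "p' < r \<and> r \<le> q' \<and> q' < s"
          have Cqs: "C q' s"
          proof (cases "r = q'")
            case True then show ?thesis using Crs by simp
          next
            case False then show ?thesis using CA4[of p' r q' s] o Cpq' Crs by auto
          qed
          have "s < y"
          proof (rule ccontr)
            assume "\<not> s < y"
            show False
            proof (cases "s = y")
              case True
              have "C q' c" using CA1[of q' y c] Cqs True xr pos by auto
              moreover have "C a q'" using CA3[of a q' c] calculation Cac xr pos pq'(1) by auto
              ultimately show False using q'F xr pos pq'(1) unfolding FJ_def by auto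
            next
              case False
              have "C a q'" using CA4[of a q' y s] Cqs xr pos False pq'(1) \<open>\<not> s < y\<close> by auto
              moreover have "C q' c" using CA2[of a q' c] calculation Cac xr pos pq'(1) by auto
              ultimately show False using q'F xr pos pq'(1) unfolding FJ_def by auto
            qed
          qed
          moreover have "C p' s" using CA1[of p' q' s] Cpq' Cqs o pq' by auto
          moreover have "{p'..q'} \<subset> {p'..s}" using o pq'(1) by auto
          ultimately show False using grow[of p' s] o pos pq'(1) by auto
        next
          assume o: "r < p' \<and> p' \<le> s \<and> s < q'"
          have Crp: "C r p'"
          proof (cases "s = p'")
            case True then show ?thesis using Crs by simp
          next
            case False then show ?thesis using CA4[of r p' s q'] o Cpq' Crs by auto
          qed
          have "x < r"
          proof (rule ccontr)
            assume "\<not> x < r"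
            show False
            proof (cases "r = x")
              case True
              have "C a p'" using CA1[of a x p'] Crp True xr pos by auto
              moreover have "C p' c" using CA2[of a p' c] calculation Cac xr pos pq'(1) by auto
              ultimately show False using p'F xr pos pq'(1) unfolding FJ_def by auto
            next
              case False
              have "C p' c" using CA4[of r x p' c] Crp xr pos False pq'(1) \<open>\<not> x < r\<close> by auto
              moreover have "C a p'" using CA3[of a p' c] calculation Cac xr pos pq'(1) by auto
              ultimately show False using p'F xr pos pq'(1) unfolding FJ_def by auto
            qed
          qed
          moreover have "C r q'" using CA1[of r p' q'] Crp Cpq' o pq' by auto
          moreover have "{p'..q'} \<subset> {r..q'}" using o pq'(1) by auto
          ultimately show False using grow[of r q'] o pos pq'(1) by auto
        qed
      qed
    qed
    have "good_gap n Ps b (x,y)"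
      unfolding good_gap_def
      apply (rule exI[of _ K])
      using strong Kc cardK pos pq' by auto
    then show ?thesis using bgs by auto
  qed
qed

end

context cl begin

lemma backdir:
  assumes ac: "a \<le> c" and Cac: "C a c"
    and R: "bgaps n Ps b {a..c} = {} \<or> (\<exists>g. bgaps n Ps b {a..c} = {g} \<and> good_gap n Ps b g)"
  shows "bnested n Ps b {a..c}"
proof -
  have aF: "a \<in> FJ a c" "c \<in> FJ a c" using FJ_ends[OF ac Cac] by auto
  have bgE: "bgaps n Ps b {a..c} = {(x', y'). consec (FJ a c) x' y' \<and> y' - x' > int b}"
    using bg[OF ac Cac] by simp
  from R show ?thesis
  proof
    assume e: "bgaps n Ps b {a..c} = {}"
    have b1: "bnested n Ps b {a..a}"
      by (rule bnested.single) (use Caa[OF ac Cac] in auto)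
    show ?thesis
      apply (rule peel[where u=a and v=a and m="nat (c - a)", rule_format])
      using ac Cac aF b1 e unfolding bgE by force+
  next
    assume "\<exists>g. bgaps n Ps b {a..c} = {g} \<and> good_gap n Ps b g"
    then obtain x y where g: "bgaps n Ps b {a..c} = {(x,y)}" "good_gap n Ps b (x,y)" by auto
    have cxy: "consec (FJ a c) x y" "y - x > int b" using g(1) unfolding bgE by auto
    then have xy: "x \<in> FJ a c" "y \<in> FJ a c" "x < y" unfolding consec_def by auto
    have Cxy: "C x y" using FJ_front[OF ac Cac] xy unfolding is_frontiers_def by auto
    obtain I where I: "strong n Ps I" "bnested n Ps b I" "x < Min I" "Max I < y"
       "int (card I) \<ge> y - x + 1 - int b"
      using g(2) unfolding good_gap_def by auto
    obtain p q where pq: "p \<le> q" "I = {p..q}" using cons_shape I(1) unfolding strong_def by blast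
    have mmI: "Min I = p" "Max I = q" using mm[OF pq(1)] pq by auto
    have pqxy: "x < p" "q < y" using I(3,4) mmI by auto
    have sub: "I \<subset> {x..y}" using pqxy pq by auto
    have cI: "int (card I) = q - p + 1" using pq by simp
    have cxy2: "card {x..y} \<le> card I + b" using I(5) cI xy by simp
    have bxy: "bnested n Ps b {x..y}"
      by (rule bnested.step[OF Cxy I(2) sub cxy2])
    have hyp: "\<forall>x' y'. consec (FJ a c) x' y' \<and> (y' \<le> x \<or> y \<le> x') \<longrightarrow> y' - x' \<le> int b"
    proof (intro allI impI)
      fix x' y'
      assume h: "consec (FJ a c) x' y' \<and> (y' \<le> x \<or> y \<le> x')"
      then have "(x', y') \<noteq> (x, y)" using xy unfolding consec_def by auto
      then show "y' - x' \<le> int b" using h g(1) unfolding bgE by auto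
    qed
    have xyr: "a \<le> x" "x \<le> y" "y \<le> c" using FJ_mem[OF xy(1)] FJ_mem[OF xy(2)] xy(3) by auto
    show ?thesis
      using peel[where u=x and v=y and m="nat ((x - a) + (c - y))", rule_format, of a c] ac Cac xy xyr bxy hyp
      by blast
  qed
qed

lemma fwd: "bnested n Ps b J \<Longrightarrow>
   bgaps n Ps b J = {} \<or> (\<exists>g. bgaps n Ps b J = {g} \<and> good_gap n Ps b g)"
proof (induction rule: bnested.induct)
  case (single I)
  obtain a c where ac: "a \<le> c" "I = {a..c}" using cons_shape[OF single(1)] by blast
  have "a = c" using single(2) ac by simp
  then have "FJ a c \<subseteq> {a}" unfolding FJ_def by auto
  then have "bgaps n Ps b I = {}" using bg[of a c b] ac single(1) unfolding consec_def by auto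
  then show ?case by simp
next
  case (step I I')
  obtain a c where ac: "a \<le> c" "I = {a..c}" using cons_shape[OF step.hyps(1)] by blast
  obtain p q where pq: "p \<le> q" "I' = {p..q}" using cons_shape[OF bn_cons[OF step.hyps(2)]] by blast
  have Cac: "C a c" using step.hyps(1) ac by simp
  have Cpq: "C p q" using bn_cons[OF step.hyps(2)] pq by simp
  have sub: "a \<le> p" "q \<le> c" using step.hyps(3) ac pq by auto
  have sz: "(p - a) + (c - q) \<le> int b" using step.hyps(4) ac pq by (simp add: nat_le_iff)
  have bI: "bnested n Ps b {p..q}" using step.hyps(2) pq by simp
  show ?case
  proof (cases "p \<in> FJ a c \<and> q \<in> FJ a c")
    case True
    have FJs: "FJ p q = FJ a c \<inter> {p..q}" using FJ_sub True pq by auto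
    have "bgaps n Ps b {a..c} = bgaps n Ps b {p..q}"
      unfolding bg[OF ac(1) Cac] bg[OF pq(1) Cpq]
    proof (intro set_eqI iffI)
      fix z assume "z \<in> {(x, y). consec (FJ a c) x y \<and> int b < y - x}"
      then obtain x y where z: "z = (x,y)" "consec (FJ a c) x y" "int b < y - x" by auto
      have m: "x \<in> FJ a c" "y \<in> FJ a c" "x < y" "\<And>w. w \<in> FJ a c \<Longrightarrow> x < w \<Longrightarrow> w < y \<Longrightarrow> False"
        using z(2) unfolding consec_def by auto
      have r: "a \<le> x" "y \<le> c" using FJ_mem m by auto
      have "\<not> x < p"
      proof
        assume "x < p"
        then have "y \<le> p" using m(4)[of p] True by force
        then show False using z(3) r sz sub by linarith
      qed
      moreover have "\<not> q < y"
      proof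
        assume "q < y"
        then have "q \<le> x" using m(4)[of q] True by force
        then show False using z(3) r sz sub by linarith
      qed
      ultimately have "consec (FJ p q) x y" using m FJs unfolding consec_def by auto
      then show "z \<in> {(x, y). consec (FJ p q) x y \<and> int b < y - x}" using z by auto
    next
      fix z assume "z \<in> {(x, y). consec (FJ p q) x y \<and> int b < y - x}"
      then obtain x y where z: "z = (x,y)" "consec (FJ p q) x y" "int b < y - x" by auto
      have "consec (FJ a c) x y" using z(2) FJs by (rule consec_sub)
      then show "z \<in> {(x, y). consec (FJ a c) x y \<and> int b < y - x}" using z by auto
    qed
    then show ?thesis using step.IH pq ac by simp
  next
    case False
    have both: "p \<notin> FJ a c" "q \<notin> FJ a c"
    proof -
      have "p \<in> FJ a c \<Longrightarrow> q \<in> FJ a c"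
      proof -
        assume "p \<in> FJ a c"
        then have "C a p" "C p c" using FJ_mem by auto
        then show "q \<in> FJ a c" using CA1[of a p q] CA2[of p q c] Cpq sub pq unfolding FJ_def by auto
      qed
      moreover have "q \<in> FJ a c \<Longrightarrow> p \<in> FJ a c"
      proof -
        assume "q \<in> FJ a c"
        then have "C a q" "C q c" using FJ_mem by auto
        then show "p \<in> FJ a c" using CA3[of a p q] CA1[of p q c] Cpq sub pq unfolding FJ_def by auto
      qed
      ultimately show "p \<notin> FJ a c" "q \<notin> FJ a c" using False by auto
    qed
    show ?thesis using caseB[OF sub(1) pq(1) sub(2) Cac Cpq bI sz both] ac by simp
  qed
qed

end

theorem theorem7:
  fixes n :: nat and Ps :: "int list list" and J :: "int set" and b :: nat
  assumes "n \<ge> 2"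
    and "Ps \<noteq> []"
    and "Ps ! 0 = [1..int n]"
    and "\<forall>p\<in>set Ps. signed_perm n p \<and> hd p = 1 \<and> last p = int n"
    and "conserved n Ps J"
    and "b > 0"
  shows "bnested n Ps b J \<longleftrightarrow>
           (bgaps n Ps b J = {} \<or> (\<exists>g. bgaps n Ps b J = {g} \<and> good_gap n Ps b g))"
proof -
  interpret cl n Ps
    by unfold_locales (use assms(4) in \<open>auto simp: signed_perm_def\<close>)
  obtain a c where ac: "a \<le> c" "J = {a..c}" using cons_shape[OF assms(5)] by blast
  show ?thesis using fwd backdir[OF ac(1)] assms(5) ac(2) by blast
qed


end
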